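(* As formal power series, coefficientwise modulo $4$, \[ \sum_{n=0}^\infty pl_4(n)q^n\equiv (1+q+2q^2+q^3+3q^5+2q^6+3q^7+3q^8)\sum_{n=0}^\infty pl_2(n)q^{2n}\pmod 4. \]
   Context: For a positive integer $k$, $pl_k(n)$ denotes the number of $k$-component plane partitions of $n$ (plane partitions of $n$ all of whose entries are $\le k$), with $pl_k(0)=1$ and $pl_k(n)=0$ for $n<0$; equivalently $\sum_{n\ge0}pl_k(n)q^n=\prod_{n=1}^{\infty}(1-q^n)^{-\min(k,n)}$. *)

theory Defs
  imports "HOL-Computational_Algebra.Formal_Power_Series"
begin

text \<open>Geometric series 1/(1 - q^m) = sum_j q^(m j), for m \<ge> 1.\<close>
definition geom_fps :: "nat \<Rightarrow> int fps" where
  "geom_fps m = Abs_fps (\<lambda>j. if m dvd j then 1 else 0)"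

text \<open>pl_k(n) = [q^n] prod_{m\<ge>1} (1-q^m)^(-min k m).  Factors with m > n do not
  contribute to the coefficient of q^n, so the product may be truncated at m = n.\<close>
definition pl :: "nat \<Rightarrow> nat \<Rightarrow> int" where
  "pl k n = fps_nth (\<Prod>m\<in>{1..n}. geom_fps m ^ min k m) n"

definition pl_gf :: "nat \<Rightarrow> int fps" where
  "pl_gf k = Abs_fps (pl k)"

definition pl_gf_sq :: "nat \<Rightarrow> int fps" where
  "pl_gf_sq k = Abs_fps (\<lambda>n. if even n then pl k (n div 2) else 0)"

end

theory Submission
  imports Defs
begin

abbreviation g :: "nat \<Rightarrow> int fps" where "g \<equiv> geom_fps"

lemma geom_inv: assumes "m \<ge> 1" shows "(1 - fps_X ^ m) * g m = 1"
proof -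
  have e: "g m = 1 + fps_X ^ m * g m"
  proof (rule fps_ext)
    fix n show "fps_nth (g m) n = fps_nth (1 + fps_X ^ m * g m) n"
      using assms by (cases "n < m") (auto simp: geom_fps_def fps_X_power_mult_nth dvd_def,
          (metis dvd_def dvd_minus_self)+)
  qed
  have "(1 - fps_X ^ m) * g m = g m - fps_X ^ m * g m" by (simp add: algebra_simps)
  also have "\<dots> = 1" using e by (metis add_diff_cancel_right')
  finally show ?thesis .
qed

lemma geom_one_plus: assumes "m \<ge> 1" shows "\<exists>C. g m = 1 + fps_X ^ m * C"
proof -
  have "g m = 1 + fps_X ^ m * g m"
  proof (rule fps_ext)
    fix n show "fps_nth (g m) n = fps_nth (1 + fps_X ^ m * g m) n"
      using assms by (cases "n < m") (auto simp: geom_fps_def fps_X_power_mult_nth dvd_def,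
          (metis dvd_def dvd_minus_self)+)
  qed
  thus ?thesis by blast
qed

lemma one_plus_mult:
  assumes "a = 1 + fps_X ^ k * C" "b = 1 + fps_X ^ k * D"
  shows "\<exists>E. a * b = 1 + fps_X ^ k * (E :: int fps)"
  by (rule exI[of _ "C + D + fps_X ^ k * C * D"]) (simp add: assms algebra_simps)

lemma one_plus_power:
  assumes "\<exists>C. a = 1 + fps_X ^ k * C"
  shows "\<exists>E. a ^ e = 1 + fps_X ^ k * (E :: int fps)"
proof (induction e)
  case 0 show ?case by (rule exI[of _ 0]) simp
next
  case (Suc e) then obtain E where "a ^ e = 1 + fps_X ^ k * E" by blast
  moreover from assms obtain C where "a = 1 + fps_X ^ k * C" by blast
  ultimately show ?case using one_plus_mult[of "a" k C "a^e" E] by simp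
qed

lemma trunc_mult:
  assumes "n < k" "b = 1 + fps_X ^ k * C"
  shows "fps_nth (a * b) n = fps_nth (a :: int fps) n"
proof -
  have "a * b = a + fps_X ^ k * (a * C)" by (simp add: assms algebra_simps)
  thus ?thesis using assms(1) by (simp add: fps_X_power_mult_nth)
qed

definition G :: "(nat \<Rightarrow> nat) \<Rightarrow> nat \<Rightarrow> int fps" where
  "G e N = (\<Prod>m\<in>{1..N}. g m ^ e m)"

lemma G_trunc: assumes "n \<le> N" shows "fps_nth (G e N) n = fps_nth (G e n) n"
  using assms
proof (induction N rule: dec_induct)
  case base then show ?case by simp
next
  case (step N)
  have "G e (Suc N) = G e N * g (Suc N) ^ e (Suc N)"
    unfolding G_def by (simp add: atLeastAtMostSuc_conv mult.commute)
  moreover obtain C where "g (Suc N) ^ e (Suc N) = 1 + fps_X ^ Suc N * C"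
    using one_plus_power[OF geom_one_plus[of "Suc N"]] by auto
  ultimately have "fps_nth (G e (Suc N)) n = fps_nth (G e N) n"
    using trunc_mult[of n "Suc N"] step by simp
  then show ?case using step by simp
qed

lemma pl_G: "pl k n = fps_nth (G (\<lambda>m. min k m) n) n"
  unfolding pl_def G_def by simp

definition cong4 :: "int fps \<Rightarrow> int fps \<Rightarrow> bool" where
  "cong4 f h \<longleftrightarrow> (\<exists>r. f = h + 4 * r)"

lemma cong4_refl: "cong4 f f" unfolding cong4_def by (rule exI[of _ 0]) simp

lemma cong4_sym: "cong4 f h \<Longrightarrow> cong4 h f"
  unfolding cong4_def by (metis add_diff_cancel_right' add_uminus_conv_diff diff_add_cancel
    minus_mult_right)

lemma cong4_trans: "cong4 f h \<Longrightarrow> cong4 h k \<Longrightarrow> cong4 f k"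
  unfolding cong4_def by (metis add.assoc distrib_left)

lemma cong4_mult: "cong4 f h \<Longrightarrow> cong4 f' h' \<Longrightarrow> cong4 (f * f') (h * h')"
proof -
  assume "cong4 f h" "cong4 f' h'"
  then obtain r r' where "f = h + 4 * r" "f' = h' + 4 * r'" unfolding cong4_def by blast
  then have "f * f' = h * h' + 4 * (r * h' + h * r' + 4 * r * r')"
    by (simp add: algebra_simps)
  then show ?thesis unfolding cong4_def by blast
qed

lemma cong4_power: "cong4 f h \<Longrightarrow> cong4 (f ^ e) (h ^ e)"
  by (induction e) (auto intro: cong4_mult cong4_refl)

lemma cong4_prod: "(\<And>m. m \<in> S \<Longrightarrow> cong4 (f m) (h m)) \<Longrightarrow> cong4 (prod f S) (prod h S)"
  by (induction S rule: infinite_finite_induct) (auto intro: cong4_mult cong4_refl)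

lemma cong4_nth: "cong4 f h \<Longrightarrow> fps_nth f n mod 4 = fps_nth h n mod 4"
  unfolding cong4_def by (auto simp: numeral_fps_const)

lemma alg4: "(1 - (y::'a::comm_ring_1)) ^ 4 = (1 - y^2)^2 + 4 * (- y + 2 * y^2 - y^3)"
  by (simp add: eval_nat_numeral algebra_simps)

lemma geom4: assumes "m \<ge> 1" shows "cong4 (g m ^ 4) (g (2*m) ^ 2)"
proof -
  have i1: "(1 - fps_X ^ m) * g m = 1" using geom_inv assms by simp
  have i2: "(1 - (fps_X ^ m)^2) * g (2*m) = 1" using geom_inv[of "2*m"] assms
    by (simp add: power_mult[symmetric] mult.commute)
  have "g (2*m) ^ 2 = g (2*m) ^ 2 * ((1 - fps_X ^ m) * g m) ^ 4"
    by (simp only: i1 power_one mult_1_right)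
  also have "\<dots> = g (2*m) ^ 2 * g m ^ 4 * (1 - fps_X ^ m) ^ 4"
    by (simp only: power_mult_distrib mult_ac)
  finally have e: "g (2*m) ^ 2 = g (2*m) ^ 2 * g m ^ 4 * ((1 - (fps_X ^ m)^2)^2 +
     4 * (- (fps_X ^ m) + 2 * (fps_X ^ m)^2 - (fps_X ^ m)^3))" by (simp only: alg4)
  have "g (2*m) ^ 2 * g m ^ 4 * (1 - (fps_X ^ m)^2)^2 = g m ^ 4 * ((1 - (fps_X ^ m)^2) * g (2*m)) ^ 2"
    by (simp only: power_mult_distrib mult_ac)
  also have "\<dots> = g m ^ 4" using i2 by simp
  finally have "g (2*m) ^ 2 = g m ^ 4 + 4 * (g (2*m) ^ 2 * g m ^ 4 * (- (fps_X ^ m) + 2 * (fps_X ^ m)^2 - (fps_X ^ m)^3))"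
    using e by (simp add: algebra_simps)
  thus ?thesis using cong4_sym unfolding cong4_def by blast
qed

lemma comp2_nth: "fps_nth (f oo fps_X ^ 2) n = (if even n then fps_nth f (n div 2) else (0::int))"
proof -
  have "fps_nth (f oo fps_X ^ 2) n = (\<Sum>i=0..n. fps_nth f i * fps_nth (fps_X ^ (2*i)) n)"
    by (simp add: fps_compose_nth power_mult)
  also have "\<dots> = (\<Sum>i=0..n. if i = n div 2 \<and> even n then fps_nth f i else 0)"
    by (rule sum.cong) auto
  also have "\<dots> = (if even n then fps_nth f (n div 2) else 0)"
    by (cases "even n") (simp_all add: sum.delta')
  finally show ?thesis .
qed

lemma g_comp: "g m oo fps_X ^ 2 = g (2*m)"
proof (rule fps_ext)
  fix n
  show "fps_nth (g m oo fps_X ^ 2) n = fps_nth (g (2*m)) n"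
  proof (cases "even n")
    case True
    then obtain k where "n = 2*k" by blast
    then show ?thesis by (simp add: comp2_nth geom_fps_def)
  next
    case False
    then show ?thesis by (auto simp: comp2_nth geom_fps_def)
  qed
qed

lemma polyP: "(1::'a::comm_ring_1) + y + 2 * y ^ 2 + y ^ 3 + 3 * y ^ 5 + 2 * y ^ 6 + 3 * y ^ 7 + 3 * y ^ 8
  = (1 - y)^3 * (1 - y^2) * (1 - y^3) + 4 * (y + y^5 + y^6 + y^8)"
  by (simp add: eval_nat_numeral algebra_simps)

lemma key: "cong4 (g 1 * g 2 ^ 2 * g 3 ^ 3)
   ((1 - fps_X)^3 * (1 - fps_X^2) * (1 - fps_X^3) * g 2 * g 4 ^ 2 * g 6 ^ 2)"
proof -
  have i1: "(1 - fps_X) * g 1 = 1" using geom_inv[of 1] by simp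
  have i2: "(1 - fps_X^2) * g 2 = 1" using geom_inv[of 2] by simp
  have i3: "(1 - fps_X^3) * g 3 = 1" using geom_inv[of 3] by simp
  have e1: "g 1 = (1 - fps_X)^3 * g 1 ^ 4"
  proof -
    have "g 1 = g 1 * ((1 - fps_X) * g 1)^3" by (simp only: i1 power_one mult_1_right)
    also have "\<dots> = (1 - fps_X)^3 * g 1 ^ 4" by (simp add: power_mult_distrib eval_nat_numeral mult_ac)
    finally show ?thesis .
  qed
  have e2: "g 2 ^ 2 = (1 - fps_X^2)^2 * g 2 ^ 4"
  proof -
    have "g 2 ^ 2 = g 2 ^ 2 * ((1 - fps_X^2) * g 2)^2" by (simp only: i2 power_one mult_1_right)
    also have "\<dots> = (1 - fps_X^2)^2 * g 2 ^ 4" by (simp add: power_mult_distrib eval_nat_numeral mult_ac)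
    finally show ?thesis .
  qed
  have e3: "g 3 ^ 3 = (1 - fps_X^3) * g 3 ^ 4"
  proof -
    have "g 3 ^ 3 = g 3 ^ 3 * ((1 - fps_X^3) * g 3)" by (simp only: i3 mult_1_right)
    also have "\<dots> = (1 - fps_X^3) * g 3 ^ 4" by (simp add: eval_nat_numeral mult_ac)
    finally show ?thesis .
  qed
  have c: "cong4 (g 1 * g 2 ^ 2 * g 3 ^ 3)
     ((1 - fps_X)^3 * g 2 ^ 2 * ((1 - fps_X^2)^2 * g 4 ^ 2) * ((1 - fps_X^3) * g 6 ^ 2))"
  proof -
    have eq: "g 1 * g 2 ^ 2 * g 3 ^ 3 = ((1 - fps_X)^3 * g 1 ^ 4) * ((1 - fps_X^2)^2 * g 2 ^ 4)
         * ((1 - fps_X^3) * g 3 ^ 4)"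
      by (simp only: e1[symmetric] e2[symmetric] e3[symmetric])
    show ?thesis unfolding eq
      using geom4[of 1] geom4[of 2] geom4[of 3]
      by (intro cong4_mult cong4_refl) simp_all
  qed
  have "(1 - fps_X)^3 * g 2 ^ 2 * ((1 - fps_X^2)^2 * g 4 ^ 2) * ((1 - fps_X^3) * g 6 ^ 2)
     = ((1 - fps_X)^3 * (1 - fps_X^2) * (1 - fps_X^3) * g 2 * g 4 ^ 2 * g 6 ^ 2) * ((1 - fps_X^2) * g 2)"
    by (simp add: power2_eq_square mult_ac)
  also have "\<dots> = (1 - fps_X)^3 * (1 - fps_X^2) * (1 - fps_X^3) * g 2 * g 4 ^ 2 * g 6 ^ 2"
    using i2 by simp
  finally have h: "(1 - fps_X)^3 * g 2 ^ 2 * ((1 - fps_X^2)^2 * g 4 ^ 2) * ((1 - fps_X^3) * g 6 ^ 2)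
     = (1 - fps_X)^3 * (1 - fps_X^2) * (1 - fps_X^3) * g 2 * g 4 ^ 2 * g 6 ^ 2" .
  show ?thesis using c unfolding h .
qed

lemma split4: "3 \<le> N \<Longrightarrow> {1..N} = insert 1 (insert 2 (insert 3 {4..N::nat}))"
  by auto

theorem mainTheorem6:
  shows "\<forall>n. fps_nth (pl_gf 4) n mod 4 =
     fps_nth ((1 + fps_X + 2 * fps_X ^ 2 + fps_X ^ 3 + 3 * fps_X ^ 5 + 2 * fps_X ^ 6
               + 3 * fps_X ^ 7 + 3 * fps_X ^ 8) * pl_gf_sq 2) n mod 4"
proof
  fix n :: nat
  define N where "N = n + 3"
  define P :: "int fps" where "P = 1 + fps_X + 2 * fps_X ^ 2 + fps_X ^ 3 + 3 * fps_X ^ 5 + 2 * fps_X ^ 6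
               + 3 * fps_X ^ 7 + 3 * fps_X ^ 8"
  define Q :: "int fps" where "Q = (1 - fps_X)^3 * (1 - fps_X^2) * (1 - fps_X^3)"
  define A where "A = G (\<lambda>m. min 4 m) N"
  define B where "B = G (\<lambda>m. min 2 m) N oo fps_X ^ 2"
  define R where "R = (\<Prod>m\<in>{4..N}. g m ^ 4)"
  define R' where "R' = (\<Prod>m\<in>{4..N}. g (2*m) ^ 2)"
  have N3: "3 \<le> N" unfolding N_def by simp
  have A_eq: "A = g 1 * g 2 ^ 2 * g 3 ^ 3 * R"
  proof -
    have "A = g 1 * (g 2 ^ 2 * (g 3 ^ 3 * (\<Prod>m\<in>{4..N}. g m ^ min 4 m)))"
      unfolding A_def G_def split4[OF N3] by simp
    also have "(\<Prod>m\<in>{4..N}. g m ^ min 4 m) = R"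
      unfolding R_def by (rule prod.cong) auto
    finally show ?thesis by (simp add: mult_ac)
  qed
  have B_prod: "B = (\<Prod>m\<in>{1..N}. g (2*m) ^ min 2 m)"
    unfolding B_def G_def
    by (simp add: fps_compose_prod_distrib fps_compose_power[symmetric] g_comp)
  have B_eq: "B = g 2 * g 4 ^ 2 * g 6 ^ 2 * R'"
  proof -
    have "B = g 2 * (g 4 ^ 2 * (g 6 ^ 2 * (\<Prod>m\<in>{4..N}. g (2*m) ^ min 2 m)))"
      unfolding B_prod split4[OF N3] by simp
    also have "(\<Prod>m\<in>{4..N}. g (2*m) ^ min 2 m) = R'"
      unfolding R'_def by (rule prod.cong) auto
    finally show ?thesis by (simp add: mult_ac)
  qed
  have RR: "cong4 R R'" unfolding R_def R'_def
    by (rule cong4_prod) (rule geom4, simp)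
  have AQB: "cong4 A (Q * B)"
  proof -
    have "cong4 A ((Q * g 2 * g 4 ^ 2 * g 6 ^ 2) * R')"
      unfolding A_eq using key RR unfolding Q_def by (rule cong4_mult)
    thus ?thesis unfolding B_eq by (simp add: mult_ac)
  qed
  have PQ: "cong4 (P * B) (Q * B)"
  proof -
    have "P = Q + 4 * (fps_X + fps_X^5 + fps_X^6 + fps_X^8)"
      unfolding P_def Q_def by (rule polyP)
    hence "P * B = Q * B + 4 * ((fps_X + fps_X^5 + fps_X^6 + fps_X^8) * B)"
      by (simp add: algebra_simps)
    thus ?thesis unfolding cong4_def by blast
  qed
  have AP: "cong4 A (P * B)" using AQB PQ cong4_sym cong4_trans by blast
  have lhs: "fps_nth (pl_gf 4) n = fps_nth A n"
    unfolding pl_gf_def A_def using G_trunc[of n N] pl_G[of 4 n] by (simp add: N_def)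
  have Bnth: "fps_nth B j = fps_nth (pl_gf_sq 2) j" if "j \<le> n" for j
  proof (cases "even j")
    case True
    have "fps_nth B j = fps_nth (G (\<lambda>m. min 2 m) N) (j div 2)"
      unfolding B_def using True by (simp add: comp2_nth)
    also have "\<dots> = pl 2 (j div 2)"
      using G_trunc[of "j div 2" N] pl_G[of 2 "j div 2"] that by (simp add: N_def)
    finally show ?thesis using True by (simp add: pl_gf_sq_def)
  next
    case False
    then show ?thesis unfolding B_def by (simp add: comp2_nth pl_gf_sq_def)
  qed
  have rhs: "fps_nth (P * B) n = fps_nth (P * pl_gf_sq 2) n"
    unfolding fps_mult_nth by (rule sum.cong) (auto simp: Bnth)
  show "fps_nth (pl_gf 4) n mod 4 = fps_nth (P * pl_gf_sq 2) n mod 4"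
    using cong4_nth[OF AP, of n] lhs rhs by simp
qed

end
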